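(* Let $G=(V,E)$ be a connected, $d$-regular graph on $n$ vertices with adjacency matrix $A$, let $D=d\cdot I_n$, and let $\{\phi_1,\dots,\phi_n\}\subset\mathbb{R}^n$ be an orthonormal basis of eigenvectors of the symmetric matrix $AD^{-1}$, where $\phi_i$ has eigenvalue $\lambda_i$, the eigenvalues are ordered as $1=\lambda_1\geq|\lambda_2|\geq\dots\geq|\lambda_n|\geq 0$, and $\phi_1 = \frac{1}{\sqrt n}(1,\dots,1)$. Let $1\leq \ell\leq n-1$. Then there exist a subset $U\subset V$ with $\#U\leq \ell$ and nonnegative weights $a_u\geq 0$ ($u\in U$) such that for all functions $f:V\to\mathbb{R}$, $$\left|\frac{1}{|V|}\sum_{v\in V} f(v) - \sum_{u\in U} a_u f(u)\right| \leq \left(\sum_{i=\ell+1}^n \langle \phi_i, f\rangle^2\right)^{1/2}.$$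
   Context: Functions $f:V\to\mathbb{R}$ are identified with vectors in $\mathbb{R}^n$ indexed by the vertices, and $\langle\cdot,\cdot\rangle$ is the standard inner product on $\mathbb{R}^n$. *)

theory Defs
  imports "HOL-Analysis.Analysis"
begin

text \<open>Finite simple graphs on the vertex type 'v (vertex set V = UNIV),
  given by a symmetric irreflexive edge relation E.\<close>

definition simple_graph :: "('v \<Rightarrow> 'v \<Rightarrow> bool) \<Rightarrow> bool" where
  "simple_graph E \<longleftrightarrow> (\<forall>v w. E v w \<longleftrightarrow> E w v) \<and> (\<forall>v. \<not> E v v)"

definition regular_graph :: "('v::finite \<Rightarrow> 'v \<Rightarrow> bool) \<Rightarrow> nat \<Rightarrow> bool" where
  "regular_graph E d \<longleftrightarrow> (\<forall>v. card {w. E v w} = d)"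

definition connected_graph :: "('v \<Rightarrow> 'v \<Rightarrow> bool) \<Rightarrow> bool" where
  "connected_graph E \<longleftrightarrow> (\<forall>v w. E\<^sup>*\<^sup>* v w)"

definition adj_matrix :: "('v \<Rightarrow> 'v \<Rightarrow> bool) \<Rightarrow> 'v \<Rightarrow> 'v \<Rightarrow> real" where
  "adj_matrix E v w = (if E v w then 1 else 0)"

definition vinner :: "('v::finite \<Rightarrow> real) \<Rightarrow> ('v \<Rightarrow> real) \<Rightarrow> real" where
  "vinner f g = (\<Sum>v\<in>UNIV. f v * g v)"

definition mat_app :: "('v::finite \<Rightarrow> 'v \<Rightarrow> real) \<Rightarrow> ('v \<Rightarrow> real) \<Rightarrow> 'v \<Rightarrow> real" where
  "mat_app M f v = (\<Sum>w\<in>UNIV. M v w * f w)"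

end

theory Submission
  imports Defs
begin

lemma parseval_vec:
  fixes \<Phi> :: "nat \<Rightarrow> real^'v"
  assumes orth: "\<And>i j. i \<in> {1..n} \<Longrightarrow> j \<in> {1..n} \<Longrightarrow> \<Phi> i \<bullet> \<Phi> j = (if i = j then 1 else 0)"
    and n: "n = CARD('v)"
  shows "x = (\<Sum>i=1..n. (x \<bullet> \<Phi> i) *\<^sub>R \<Phi> i)"
proof -
  let ?B = "\<Phi> ` {1..n}"
  have inj: "inj_on \<Phi> {1..n}"
  proof (rule inj_onI)
    fix i j assume ij: "i \<in> {1..n}" "j \<in> {1..n}" "\<Phi> i = \<Phi> j"
    then have "\<Phi> i \<bullet> \<Phi> j = 1" using orth[of i i] by simp
    then show "i = j" using orth[OF ij(1,2)] by (simp split: if_splits)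
  qed
  have indep: "independent ?B"
  proof (rule pairwise_orthogonal_independent)
    show "pairwise orthogonal ?B"
      unfolding pairwise_def orthogonal_def using orth by fastforce
    show "0 \<notin> ?B" using orth by fastforce
  qed
  have card: "card ?B = n" using inj by (simp add: card_image)
  have "UNIV \<subseteq> span ?B"
    by (rule card_ge_dim_independent) (use indep card n in auto)
  then have "x \<in> span ?B" by auto
  then obtain c where c: "x = (\<Sum>y\<in>?B. c y *\<^sub>R y)"
    using span_finite[of ?B] by auto
  then have c2: "x = (\<Sum>i=1..n. c (\<Phi> i) *\<^sub>R \<Phi> i)"
    using sum.reindex[OF inj, of "\<lambda>y. c y *\<^sub>R y"] by simp
  have cc: "x \<bullet> \<Phi> j = c (\<Phi> j)" if j: "j \<in> {1..n}" for j
  proof -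
    have "x \<bullet> \<Phi> j = (\<Sum>i=1..n. c (\<Phi> i) * (\<Phi> i \<bullet> \<Phi> j))"
      by (subst c2) (simp add: inner_sum_left)
    also have "\<dots> = (\<Sum>i=1..n. if i = j then c (\<Phi> j) else 0)"
      by (rule sum.cong) (use orth j in auto)
    also have "\<dots> = c (\<Phi> j)" using j by simp
    finally show ?thesis .
  qed
  show ?thesis by (subst c2) (use cc in simp)
qed

lemma parseval_fun:
  fixes \<phi> :: "nat \<Rightarrow> 'v::finite \<Rightarrow> real"
  assumes orth: "\<And>i j. i \<in> {1..n} \<Longrightarrow> j \<in> {1..n} \<Longrightarrow> vinner (\<phi> i) (\<phi> j) = (if i = j then 1 else 0)"
    and n: "n = CARD('v)"
  shows "vinner L g = (\<Sum>i=1..n. vinner L (\<phi> i) * vinner (\<phi> i) g)"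
proof -
  define \<Phi> where "\<Phi> i = (\<chi> v. \<phi> i v)" for i
  have vi: "vinner f h = (\<chi> v. f v) \<bullet> (\<chi> v. h v)" for f h :: "'v \<Rightarrow> real"
    by (simp add: vinner_def inner_vec_def)
  have o: "\<Phi> i \<bullet> \<Phi> j = (if i = j then 1 else 0)" if "i \<in> {1..n}" "j \<in> {1..n}" for i j
    using orth[OF that] by (simp add: \<Phi>_def vi)
  have P: "(\<chi> v. g v) = (\<Sum>i=1..n. ((\<chi> v. g v) \<bullet> \<Phi> i) *\<^sub>R \<Phi> i)"
    by (rule parseval_vec[OF o n])
  have gw: "g w = (\<Sum>i=1..n. vinner (\<phi> i) g * \<phi> i w)" for w
  proof -
    have "g w = (\<chi> v. g v) $ w" by simp
    also have "\<dots> = (\<Sum>i=1..n. ((\<chi> v. g v) \<bullet> \<Phi> i) * \<phi> i w)"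
      by (subst P) (simp add: \<Phi>_def)
    also have "\<dots> = (\<Sum>i=1..n. vinner (\<phi> i) g * \<phi> i w)"
      by (simp add: vi \<Phi>_def inner_commute)
    finally show ?thesis .
  qed
  have "vinner L g = (\<Sum>w\<in>UNIV. L w * (\<Sum>i=1..n. vinner (\<phi> i) g * \<phi> i w))"
    using gw by (simp add: vinner_def[of L])
  also have "\<dots> = (\<Sum>i=1..n. \<Sum>w\<in>UNIV. vinner (\<phi> i) g * (L w * \<phi> i w))"
    by (simp add: sum_distrib_left mult.assoc mult.left_commute sum.swap[of _ UNIV])
  also have "\<dots> = (\<Sum>i=1..n. vinner L (\<phi> i) * vinner (\<phi> i) g)"
    by (simp add: vinner_def sum_distrib_left sum_distrib_right mult.commute mult.left_commute)
       (rule sum.cong[OF refl], subst sum.swap, simp add: ac_simps)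
  finally show ?thesis .
qed

theorem proposition3:
  fixes E :: "'v::finite \<Rightarrow> 'v \<Rightarrow> bool"
    and d :: nat and n :: nat and l :: nat
    and \<phi> :: "nat \<Rightarrow> 'v \<Rightarrow> real" and lam :: "nat \<Rightarrow> real"
  assumes graph: "simple_graph E"
    and conn: "connected_graph E"
    and reg: "regular_graph E d"
    and n_def: "n = CARD('v)"
    and eig: "\<And>i. i \<in> {1..n} \<Longrightarrow>
        mat_app (\<lambda>v w. adj_matrix E v w / real d) (\<phi> i) = (\<lambda>v. lam i * \<phi> i v)"
    and orthonormal: "\<And>i j. i \<in> {1..n} \<Longrightarrow> j \<in> {1..n} \<Longrightarrow>
        vinner (\<phi> i) (\<phi> j) = (if i = j then 1 else 0)"
    and lam1: "lam 1 = 1"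
    and lam_ord: "\<And>i j. 1 \<le> i \<Longrightarrow> i \<le> j \<Longrightarrow> j \<le> n \<Longrightarrow> \<bar>lam j\<bar> \<le> \<bar>lam i\<bar>"
    and phi1: "\<phi> 1 = (\<lambda>v. 1 / sqrt (real n))"
    and l_range: "1 \<le> l" "l \<le> n - 1"
  shows "\<exists>U :: 'v set. \<exists>a :: 'v \<Rightarrow> real. card U \<le> l \<and> (\<forall>u\<in>U. a u \<ge> 0) \<and>
    (\<forall>f :: 'v \<Rightarrow> real.
       \<bar>(1 / real (card (UNIV :: 'v set))) * (\<Sum>v\<in>UNIV. f v) - (\<Sum>u\<in>U. a u * f u)\<bar>
         \<le> sqrt (\<Sum>i = l+1..n. (vinner (\<phi> i) f)\<^sup>2))"
proof -
  have npos: "n > 0" using n_def by simp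
  have l_le: "l \<le> n" using l_range by simp
  define \<Phi> where "\<Phi> i = (\<chi> v. \<phi> i v)" for i
  have vi: "vinner f h = (\<chi> v. f v) \<bullet> (\<chi> v. h v)" for f h :: "'v \<Rightarrow> real"
    by (simp add: vinner_def inner_vec_def)
  have o: "\<Phi> i \<bullet> \<Phi> j = (if i = j then 1 else 0)" if "i \<in> {1..n}" "j \<in> {1..n}" for i j
    using orthonormal[OF that] by (simp add: \<Phi>_def vi)
  have sum0: "(\<Sum>v\<in>UNIV. \<phi> j v) = 0" if j: "j \<in> {2..n}" for j
  proof -
    have "vinner (\<phi> 1) (\<phi> j) = 0" using orthonormal[of 1 j] j npos by auto
    then have "(1 / sqrt (real n)) * (\<Sum>v\<in>UNIV. \<phi> j v) = 0"
      unfolding vinner_def phi1 by (simp only: sum_distrib_left)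
    then show ?thesis using npos by simp
  qed
  define q where "q v = (\<Sum>j\<in>{2..l}. \<phi> j v *\<^sub>R \<Phi> j)" for v
  have qinner: "\<Phi> j \<bullet> q v = \<phi> j v" if j: "j \<in> {2..l}" for j v
  proof -
    have "\<Phi> j \<bullet> q v = (\<Sum>k\<in>{2..l}. \<phi> k v * (\<Phi> j \<bullet> \<Phi> k))"
      by (simp add: q_def inner_sum_right)
    also have "\<dots> = (\<Sum>k\<in>{2..l}. if k = j then \<phi> j v else 0)"
      by (rule sum.cong) (use o j l_le in auto)
    also have "\<dots> = \<phi> j v" using j by simp
    finally show ?thesis .
  qed
  have zero_in: "0 \<in> convex hull (range q)"
  proof -
    have "(\<Sum>v\<in>UNIV. (1 / real n) *\<^sub>R q v) \<in> convex hull (range q)"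
      by (rule convex_sum) (use npos n_def in \<open>auto intro: hull_inc\<close>)
    moreover have "(\<Sum>v\<in>UNIV. (1 / real n) *\<^sub>R q v) = 0"
    proof -
      have "(\<Sum>v\<in>UNIV. (1 / real n) *\<^sub>R q v) = (\<Sum>j\<in>{2..l}. ((1 / real n) * (\<Sum>v\<in>UNIV. \<phi> j v)) *\<^sub>R \<Phi> j)"
        unfolding q_def scaleR_sum_right scaleR_sum_left sum_distrib_left
        by (subst sum.swap) simp
      also have "\<dots> = 0" using sum0 l_le by (intro sum.neutral) auto
      finally show ?thesis .
    qed
    ultimately show ?thesis by simp
  qed
  have rq: "range q \<subseteq> span (\<Phi> ` {2..l})"
  proof clarify
    fix v show "q v \<in> span (\<Phi> ` {2..l})"
      unfolding q_def by (intro span_sum span_scale span_base) auto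
  qed
  have "aff_dim (range q) \<le> aff_dim (span (\<Phi> ` {2..l}))"
    by (rule aff_dim_subset[OF rq])
  also have "\<dots> = int (dim (span (\<Phi> ` {2..l})))"
    by (rule aff_dim_subspace) simp
  also have "dim (span (\<Phi> ` {2..l})) \<le> card (\<Phi> ` {2..l})"
    by (rule dim_le_card) auto
  also have "card (\<Phi> ` {2..l}) \<le> card {2..l}" by (rule card_image_le) simp
  also have "card {2..l} = l - 1" by simp
  finally have ad: "aff_dim (range q) + 1 \<le> int l" using l_range by simp
  obtain S where S: "finite S" "S \<subseteq> range q" "card S \<le> aff_dim (range q) + 1" "0 \<in> convex hull S"
    using zero_in caratheodory_aff_dim[of "range q"] by auto
  obtain u where u: "\<forall>x\<in>S. 0 \<le> u x" "sum u S = 1" "(\<Sum>x\<in>S. u x *\<^sub>R x) = 0"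
    using S(4) convex_hull_finite[OF S(1)] by auto
  define g where "g x = (SOME v. q v = x)" for x
  have qg: "q (g x) = x" if "x \<in> S" for x
    using S(2) that unfolding g_def by (metis (mono_tags, lifting) imageE someI subsetD)
  have ginj: "inj_on g S" by (metis inj_onI qg)
  define U where "U = g ` S"
  define a where "a v = u (q v)" for v
  have re: "(\<Sum>v\<in>U. a v * h v) = (\<Sum>x\<in>S. u x * h (g x))" for h
    unfolding U_def a_def by (simp add: sum.reindex[OF ginj] qg)
  have cardU: "card U \<le> l"
    using card_image_le[OF S(1), of g] S(3) ad unfolding U_def by linarith
  have anneg: "\<forall>v\<in>U. a v \<ge> 0" unfolding U_def a_def using u(1) qg by auto
  have asum: "(\<Sum>v\<in>U. a v) = 1" using re[of "\<lambda>_. 1"] u(2) by simp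
  have exact: "(\<Sum>v\<in>U. a v * \<phi> j v) = 0" if j: "j \<in> {2..l}" for j
  proof -
    have "(\<Sum>v\<in>U. a v * \<phi> j v) = (\<Sum>x\<in>S. u x * (\<Phi> j \<bullet> x))"
      unfolding re using qinner[OF j] qg by (metis (no_types, lifting) sum.cong)
    also have "\<dots> = \<Phi> j \<bullet> (\<Sum>x\<in>S. u x *\<^sub>R x)" by (simp add: inner_sum_right)
    also have "\<dots> = 0" using u(3) by simp
    finally show ?thesis .
  qed
  define b where "b v = (if v \<in> U then a v else 0)" for v
  define L where "L v = 1 / real n - b v" for v
  have finU: "finite U" by simp
  have bsum: "(\<Sum>v\<in>UNIV. b v * h v) = (\<Sum>v\<in>U. a v * h v)" for h
  proof -
    have "(\<Sum>v\<in>UNIV. b v * h v) = (\<Sum>v\<in>UNIV. if v \<in> U then a v * h v else 0)"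
      unfolding b_def by (rule sum.cong) auto
    also have "\<dots> = (\<Sum>v\<in>U. a v * h v)" by (simp add: sum.If_cases)
    finally show ?thesis .
  qed
  have bnn: "0 \<le> b v" for v using anneg b_def by auto
  have ble: "b v \<le> 1" for v
  proof (cases "v \<in> U")
    case True
    then have "a v \<le> (\<Sum>w\<in>U. a w)"
      by (intro member_le_sum) (use anneg in auto)
    then show ?thesis using True asum b_def by simp
  qed (simp add: b_def)
  have Lorth: "vinner L (\<phi> i) = 0" if i: "i \<in> {1..l}" for i
  proof (cases "i = 1")
    case True
    have "vinner L (\<phi> i) = (1 / real n) * (\<Sum>v\<in>UNIV. \<phi> 1 v) - (\<Sum>v\<in>UNIV. b v * \<phi> 1 v)"
      using True by (simp add: vinner_def L_def left_diff_distrib sum_subtractf sum_distrib_left)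
    also have "\<dots> = (1 / real n) * (real n * (1 / sqrt (real n))) - (\<Sum>v\<in>U. a v) * (1 / sqrt (real n))"
      unfolding bsum phi1 by (simp add: n_def sum_divide_distrib)
    also have "\<dots> = 0" using npos asum by simp
    finally show ?thesis .
  next
    case False
    then have j: "i \<in> {2..l}" using i by auto
    have "vinner L (\<phi> i) = (1 / real n) * (\<Sum>v\<in>UNIV. \<phi> i v) - (\<Sum>v\<in>UNIV. b v * \<phi> i v)"
      by (simp add: vinner_def L_def left_diff_distrib sum_subtractf sum_distrib_left)
    also have "\<dots> = 0" unfolding bsum using exact[OF j] sum0[of i] j l_le by simp
    finally show ?thesis .
  qed
  have Lnorm: "vinner L L \<le> 1"
  proof -
    have "vinner L L = (\<Sum>v::'v\<in>UNIV. (1 / real n)^2) - 2 / real n * (\<Sum>v\<in>UNIV. b v) + (\<Sum>v\<in>UNIV. (b v)^2)"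
      by (simp add: vinner_def L_def power2_eq_square algebra_simps sum.distrib sum_subtractf sum_distrib_left sum_divide_distrib sum_distrib_right)
    also have "(\<Sum>v\<in>UNIV. b v) = 1" using bsum[of "\<lambda>_. 1"] asum by simp
    also have "(\<Sum>v::'v\<in>UNIV. (1 / real n)^2) = 1 / real n"
      using npos n_def by (simp add: power2_eq_square)
    also have "(\<Sum>v\<in>UNIV. (b v)^2) \<le> (\<Sum>v\<in>UNIV. b v)"
      by (intro sum_mono) (metis bnn ble power2_eq_square mult_left_le)
    also have "(\<Sum>v\<in>UNIV. b v) = 1" using bsum[of "\<lambda>_. 1"] asum by simp
    finally have "1 + real n * vinner L L \<le> real n" using npos by (simp add: field_simps)
    then have "real n * vinner L L \<le> real n * 1" by linarith
    then show ?thesis using npos by simp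
  qed
  have main: "\<bar>vinner L f\<bar> \<le> sqrt (\<Sum>i = l+1..n. (vinner (\<phi> i) f)\<^sup>2)" for f
  proof -
    have split: "{1..n} = {1..l} \<union> {l+1..n}" using l_le by auto
    have "vinner L f = (\<Sum>i=1..n. vinner L (\<phi> i) * vinner (\<phi> i) f)"
      by (rule parseval_fun[OF orthonormal n_def])
    also have "\<dots> = (\<Sum>i=l+1..n. vinner L (\<phi> i) * vinner (\<phi> i) f)"
      unfolding split using Lorth by (subst sum.union_disjoint) auto
    finally have e: "vinner L f = \<dots>" .
    have cs: "(vinner L f)^2 \<le> (\<Sum>i=l+1..n. (vinner L (\<phi> i))^2) * (\<Sum>i=l+1..n. (vinner (\<phi> i) f)^2)"
      unfolding e by (rule Cauchy_Schwarz_ineq_sum)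
    have "(\<Sum>i=l+1..n. (vinner L (\<phi> i))^2) \<le> (\<Sum>i=1..n. (vinner L (\<phi> i))^2)"
      unfolding split by (subst sum.union_disjoint) (auto intro: sum_nonneg)
    also have "(\<Sum>i=1..n. (vinner L (\<phi> i))^2) = vinner L L"
      using parseval_fun[OF orthonormal n_def, of L L]
      by (simp add: power2_eq_square vinner_def mult.commute)
    also have "\<dots> \<le> 1" by (rule Lnorm)
    finally have A: "(\<Sum>i=l+1..n. (vinner L (\<phi> i))^2) \<le> 1" .
    have "(vinner L f)^2 \<le> 1 * (\<Sum>i=l+1..n. (vinner (\<phi> i) f)^2)"
      by (rule order_trans[OF cs mult_right_mono[OF A]]) (simp add: sum_nonneg)
    then show ?thesis by (metis mult_1 real_sqrt_abs real_sqrt_le_mono)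
  qed
  show ?thesis
  proof (intro exI conjI ballI allI)
    show "card U \<le> l" by (rule cardU)
    show "0 \<le> a u" if "u \<in> U" for u using anneg that by auto
    fix f :: "'v \<Rightarrow> real"
    have "(1 / real (card (UNIV :: 'v set))) * (\<Sum>v\<in>UNIV. f v) - (\<Sum>u\<in>U. a u * f u) = vinner L f"
      using bsum[of f] by (simp add: vinner_def L_def n_def left_diff_distrib sum_subtractf sum_distrib_left)
    then show "\<bar>(1 / real (card (UNIV :: 'v set))) * (\<Sum>v\<in>UNIV. f v) - (\<Sum>u\<in>U. a u * f u)\<bar>
         \<le> sqrt (\<Sum>i = l+1..n. (vinner (\<phi> i) f)\<^sup>2)" using main by simp
  qed
qed

end
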